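(* Let $g$ be a superfunction which is $n$ times continuously differentiable in an open neighbourhood of the unit sphere $\mathbb{S}^{m-1}\subset\mathbb{R}^m$, and let $h\in C^n((0,\infty))$. Then \[ \int_{SS}h(R^2)\,g=h(1)\int_{SS}g . \]
   Context: Fix integers $m\ge1$, $n\ge0$. Let $\Lambda_{2n}$ be the complex Grassmann algebra generated by anticommuting variables ${x\grave{}}_1,\dots,{x\grave{}}_{2n}$; superfunctions are functions $f=\sum_A {x\grave{}}_Af_A$ on open subsets of $\mathbb{R}^m$ with $\mathbb{C}$-valued coefficients $f_A$ (regularity is meant coefficientwise), ${x\grave{}}_A$ running over the monomials of $\Lambda_{2n}$. Bosonic coordinates $\underline{x}=(x_1,\dots,x_m)$, $r^2=\sum x_i^2$. Fermionic derivatives $\partial_{{x\grave{}}_j}$ satisfy $\partial_{{x\grave{}}_j}({x\grave{}}_k g)=\delta_{jk}g-{x\grave{}}_k\partial_{{x\grave{}}_j}g$ and commute with the $x_i$. Put $\underline{x}\grave{}^2=\sum_{j=1}^n{x\grave{}}_{2j-1}{x\grave{}}_{2j}$, $R^2=r^2-\underline{x}\grave{}^2$, and for $h\in C^n((0,\infty))$, $h(R^2)=\sum_{j=0}^n(-1)^j\frac{\underline{x}\grave{}^{2j}}{j!}h^{(j)}(r^2)$. The Berezin integral is $\int_B=\pi^{-n}\partial_{{x\grave{}}_{2n}}\cdots\partial_{{x\grave{}}_1}$. Using spherical coordinates $\underline{x}=r\underline{\xi}$, $\underline\xi\in\mathbb{S}^{m-1}$, with surface measure $d\underline\xi$ and $\frac{\partial}{\partial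 r^2}=\frac{1}{2r}\frac{\partial}{\partial r}$, the supersphere integral of a superfunction $f$ that is $n$ times continuously differentiable near $\mathbb{S}^{m-1}$ is \[ \int_{SS}f=\sum_{j=0}^n\int_{\mathbb{S}^{m-1}}d\underline{\xi}\int_B\frac{\underline{x}\grave{}^{2j}}{j!}\Big[\Big(\frac{\partial}{\partial r^2}\Big)^jr^{m-2}f\Big]_{r=1}. \] *)

theory Defs
  imports "HOL-Analysis.Analysis"
begin

text \<open>An element of the complex Grassmann algebra is represented by its coefficient
  family: a ::= sum over finite A of a(A) x_A, where x_A is the ordered monomial
  x_{a1} ... x_{ak} with a1 < ... < ak. Generators are indexed 1..2n; only coefficients
  of subsets of {1..2n} are ever read by the operations below.\<close>

type_synonym grass = "nat set \<Rightarrow> complex"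

text \<open>Sign of reordering x_A x_B into x_{A \<union> B} (A, B disjoint).\<close>
definition gsign :: "nat set \<Rightarrow> nat set \<Rightarrow> complex" where
  "gsign A B = (-1) ^ card ((A \<times> B) \<inter> {(p, q). q < p})"

definition gmul :: "grass \<Rightarrow> grass \<Rightarrow> grass" where
  "gmul a b = (\<lambda>C. \<Sum>A\<in>Pow C. gsign A (C - A) * a A * b (C - A))"

definition gone :: grass where
  "gone = (\<lambda>A. if A = {} then 1 else 0)"

definition gen :: "nat \<Rightarrow> grass" where
  "gen k = (\<lambda>A. if A = {k} then 1 else 0)"

primrec gpow :: "grass \<Rightarrow> nat \<Rightarrow> grass" where
  "gpow a 0 = gone"
| "gpow a (Suc k) = gmul a (gpow a k)"

definition gsq :: "nat \<Rightarrow> grass" where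
  "gsq n = (\<lambda>A. \<Sum>j=1..n. gmul (gen (2*j - 1)) (gen (2*j)) A)"

text \<open>Fermionic derivative: d_j (x_j x_A) = x_A for j \<notin> A, with the sign of
  moving x_j to the front of the ordered monomial x_{A \<union> {j}}.\<close>
definition fder :: "nat \<Rightarrow> grass \<Rightarrow> grass" where
  "fder j a = (\<lambda>A. if j \<in> A then 0
                   else (-1) ^ card {k \<in> A. k < j} * a (insert j A))"

primrec fders :: "nat \<Rightarrow> grass \<Rightarrow> grass" where
  "fders 0 a = a"
| "fders (Suc k) a = fder (Suc k) (fders k a)"

text \<open>Berezin integral pi^{-n} d_{2n} ... d_1 (the result is a scalar, i.e. the
  coefficient of the empty monomial).\<close>
definition berezin :: "nat \<Rightarrow> grass \<Rightarrow> complex" where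
  "berezin n a = inverse (of_real (pi ^ n)) * fders (2*n) a {}"

fun Ck_on :: "nat \<Rightarrow> ('a::euclidean_space) set \<Rightarrow> ('a \<Rightarrow> 'b::real_normed_vector) \<Rightarrow> bool" where
  "Ck_on 0 U f = continuous_on U f"
| "Ck_on (Suc k) U f = (f differentiable_on U \<and>
      (\<forall>i\<in>Basis. Ck_on k U (\<lambda>x. frechet_derivative f (at x) i)))"

definition Cn_real :: "nat \<Rightarrow> real set \<Rightarrow> (real \<Rightarrow> real) \<Rightarrow> bool" where
  "Cn_real n S h \<longleftrightarrow> (\<forall>j<n. \<forall>t\<in>S. (deriv ^^ j) h differentiable (at t))
                     \<and> continuous_on S ((deriv ^^ n) h)"

text \<open>A superfunction f = sum_A x_A f_A is represented as f x A = f_A(x).\<close>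

definition hR2 :: "nat \<Rightarrow> (real \<Rightarrow> real) \<Rightarrow> real^'m \<Rightarrow> grass" where
  "hR2 n h x = (\<lambda>A. \<Sum>j\<le>n. of_real ((-1) ^ j / fact j * (deriv ^^ j) h ((norm x)\<^sup>2))
                              * gpow (gsq n) j A)"

text \<open>d/d(r^2) = 1/(2r) d/dr on functions of r.\<close>
definition Dr2 :: "(real \<Rightarrow> complex) \<Rightarrow> real \<Rightarrow> complex" where
  "Dr2 \<phi> = (\<lambda>r. (1 / (2 * r)) *\<^sub>R vector_derivative \<phi> (at r))"

text \<open>Integral over the unit sphere S^{m-1} w.r.t. surface measure, via
  int_{S^{m-1}} phi d xi = m * int_{B(0,1)} phi(x/|x|) dx.\<close>
definition sphere_int :: "(real^'m \<Rightarrow> complex) \<Rightarrow> complex" where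
  "sphere_int \<phi> = of_nat CARD('m) * integral (ball 0 1) (\<lambda>x. \<phi> (x /\<^sub>R norm x))"

definition ssint :: "nat \<Rightarrow> (real^'m \<Rightarrow> grass) \<Rightarrow> complex" where
  "ssint n f = (\<Sum>j\<le>n. sphere_int (\<lambda>(\<xi>::real^'m).
       berezin n (gmul (\<lambda>A. gpow (gsq n) j A / of_nat (fact j))
         (\<lambda>A. (Dr2 ^^ j) (\<lambda>r. of_real (r powr (real CARD('m) - 2)) * f (r *\<^sub>R \<xi>) A) 1))))"

end

theory Submission
  imports Defs
begin


lemma Ck_cong:
  fixes f g :: "'a::euclidean_space \<Rightarrow> complex"
  assumes "open U" "\<And>x. x \<in> U \<Longrightarrow> f x = g x" "Ck_on k U f"
  shows "Ck_on k U g"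
  using assms
proof (induction k arbitrary: f g)
  case 0
  then show ?case using continuous_on_cong by force
next
  case (Suc k)
  have d: "f differentiable at x" if "x \<in> U" for x
    using Suc.prems that by (simp add: differentiable_on_eq_differentiable_at)
  have fd: "frechet_derivative f (at x) = frechet_derivative g (at x)" if "x \<in> U" for x
    by (rule frechet_derivative_transform_within_open[OF d[OF that] Suc.prems(1) that Suc.prems(2)])
  have "g differentiable at x" if "x \<in> U" for x
    using d[OF that] Suc.prems(1,2) that
    by (meson differentiable_def has_derivative_transform_within_open)
  moreover have "Ck_on k U (\<lambda>x. frechet_derivative g (at x) i)" if "i \<in> Basis" for i
    using Suc.IH[of "\<lambda>x. frechet_derivative f (at x) i"] Suc.prems that fd by simp
  ultimately show ?case using Suc.prems(1) by (simp add: differentiable_on_eq_differentiable_at)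
qed

lemma Ck_on_continuous: "Ck_on k U f \<Longrightarrow> continuous_on U f"
  by (cases k) (auto intro: differentiable_imp_continuous_on)

lemma Ck_Suc_imp:
  fixes f :: "'a::euclidean_space \<Rightarrow> complex"
  shows "Ck_on (Suc k) U f \<Longrightarrow> Ck_on k U f"
proof (induction k arbitrary: f)
  case 0 then show ?case by (auto intro: differentiable_imp_continuous_on)
next
  case (Suc k) then show ?case by (metis Ck_on.simps(2))
qed

lemma Ck_le: 
  fixes f :: "'a::euclidean_space \<Rightarrow> complex"
  shows "Ck_on k U f \<Longrightarrow> j \<le> k \<Longrightarrow> Ck_on j U f"
proof (induction k)
  case 0 then show ?case by simp
next
  case (Suc k) then show ?case by (metis Ck_Suc_imp le_Suc_eq)
qed

lemma Ck_subset:
  fixes f :: "'a::euclidean_space \<Rightarrow> complex"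
  shows "Ck_on k U f \<Longrightarrow> V \<subseteq> U \<Longrightarrow> Ck_on k V f"
  by (induction k arbitrary: f) (auto intro: continuous_on_subset differentiable_on_subset)

lemma Ck_const: "Ck_on k (U::'a::euclidean_space set) (\<lambda>x. c::complex)"
proof (induction k arbitrary: c)
  case 0 then show ?case by simp
next
  case (Suc k)
  have "frechet_derivative (\<lambda>x. c) (at x) = (\<lambda>h. 0)" for x
    by (metis frechet_derivative_at has_derivative_const)
  then show ?case using Suc by simp
qed

lemma Ck_add:
  fixes f g :: "'a::euclidean_space \<Rightarrow> complex"
  assumes "open U" "Ck_on k U f" "Ck_on k U g"
  shows "Ck_on k U (\<lambda>x. f x + g x)"
  using assms
proof (induction k arbitrary: f g)
  case 0 then show ?case by (simp add: continuous_on_add)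
next
  case (Suc k)
  have df: "f differentiable at x" "g differentiable at x" if "x \<in> U" for x
    using Suc.prems that by (auto simp: differentiable_on_eq_differentiable_at)
  have fd: "frechet_derivative (\<lambda>x. f x + g x) (at x) i = frechet_derivative f (at x) i + frechet_derivative g (at x) i"
    if "x \<in> U" for x i
  proof -
    have "((\<lambda>x. f x + g x) has_derivative (\<lambda>h. frechet_derivative f (at x) h + frechet_derivative g (at x) h)) (at x)"
      using df[OF that] by (intro has_derivative_add) (auto simp: frechet_derivative_works)
    from frechet_derivative_at[OF this] show ?thesis by metis
  qed
  have "Ck_on k U (\<lambda>x. frechet_derivative (\<lambda>x. f x + g x) (at x) i)" if "i \<in> Basis" for i
    apply (rule Ck_cong[OF Suc.prems(1), of "\<lambda>x. frechet_derivative f (at x) i + frechet_derivative g (at x) i"])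
    using fd apply simp
    using Suc.IH Suc.prems that by simp
  moreover have "(\<lambda>x. f x + g x) differentiable_on U"
    using Suc.prems by (simp add: differentiable_on_add)
  ultimately show ?case by simp
qed

lemma Ck_mult:
  fixes f g :: "'a::euclidean_space \<Rightarrow> complex"
  assumes "open U" "Ck_on k U f" "Ck_on k U g"
  shows "Ck_on k U (\<lambda>x. f x * g x)"
  using assms
proof (induction k arbitrary: f g)
  case 0 then show ?case by (simp add: continuous_on_mult)
next
  case (Suc k)
  have df: "f differentiable at x" "g differentiable at x" if "x \<in> U" for x
    using Suc.prems that by (auto simp: differentiable_on_eq_differentiable_at)
  have fd: "frechet_derivative (\<lambda>x. f x * g x) (at x) i = f x * frechet_derivative g (at x) i + frechet_derivative f (at x) i * g x"
    if "x \<in> U" for x i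
  proof -
    have "((\<lambda>x. f x * g x) has_derivative (\<lambda>h. f x * frechet_derivative g (at x) h + frechet_derivative f (at x) h * g x)) (at x)"
      using df[OF that] by (intro has_derivative_mult) (auto simp: frechet_derivative_works)
    from frechet_derivative_at[OF this] show ?thesis by metis
  qed
  have "Ck_on k U (\<lambda>x. frechet_derivative (\<lambda>x. f x * g x) (at x) i)" if "i \<in> Basis" for i
    apply (rule Ck_cong[OF Suc.prems(1), of "\<lambda>x. f x * frechet_derivative g (at x) i + frechet_derivative f (at x) i * g x"])
    using fd apply simp
    apply (rule Ck_add[OF Suc.prems(1)])
    using Suc.IH Suc.prems that Ck_Suc_imp[OF Suc.prems(2)] Ck_Suc_imp[OF Suc.prems(3)] by simp_all
  moreover have "(\<lambda>x. f x * g x) differentiable_on U"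
    using Suc.prems by (simp add: differentiable_on_mult)
  ultimately show ?case by simp
qed

lemma Ck_sum:
  fixes f :: "'i \<Rightarrow> 'a::euclidean_space \<Rightarrow> complex"
  assumes "open U" "\<And>t. t \<in> T \<Longrightarrow> Ck_on k U (f t)"
  shows "Ck_on k U (\<lambda>x. \<Sum>t\<in>T. f t x)"
  using assms(2)
proof (induction T rule: infinite_finite_induct)
  case (infinite A) then show ?case using Ck_const by simp
next
  case empty then show ?case using Ck_const by simp
next
  case (insert a A) then show ?case by (simp add: Ck_add assms(1))
qed




lemma Ck_coord: "Ck_on k (U::'a::euclidean_space set) (\<lambda>x. of_real (x \<bullet> i) :: complex)"
proof (cases k)
  case 0 then show ?thesis by (simp add: continuous_intros)
next
  case (Suc k')
  have hd: "((\<lambda>x. of_real (x \<bullet> i) :: complex) has_derivative (\<lambda>h. of_real (h \<bullet> i))) (at x)" for x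
    by (auto intro!: derivative_eq_intros)
  have "frechet_derivative (\<lambda>x. of_real (x \<bullet> i) :: complex) (at x) = (\<lambda>h. of_real (h \<bullet> i))" for x
    using frechet_derivative_at[OF hd] by metis
  then show ?thesis using Suc hd Ck_const by (auto simp: differentiable_on_def differentiable_def intro: has_derivative_at_withinI)
qed

lemma hd_powr:
  fixes x :: "'a::euclidean_space"
  assumes "x \<noteq> 0"
  shows "((\<lambda>x. of_real ((x \<bullet> x) powr q) :: complex) has_derivative
          (\<lambda>h. of_real (q * (x \<bullet> x) powr (q - 1) * (2 * (x \<bullet> h))))) (at x)"
proof -
  have pos: "x \<bullet> x > 0" using assms by simp
  have e: "(x \<bullet> x) powr (q - 1) = (x \<bullet> x) powr q / (x \<bullet> x)" using pos by (simp add: powr_diff)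
  show ?thesis
    using pos
    by (auto intro!: derivative_eq_intros simp: algebra_simps inner_commute e)
qed

lemma Ck_powr:
  assumes "open U" "0 \<notin> U"
  shows "Ck_on k (U::'a::euclidean_space set) (\<lambda>x. of_real ((x \<bullet> x) powr q) :: complex)"
proof (induction k arbitrary: q)
  case 0
  have "continuous_on U (\<lambda>x. (x \<bullet> x) powr q)"
    using assms(2) by (intro continuous_intros) auto
  then show ?case by (simp add: continuous_on_of_real)
next
  case (Suc k)
  have hd: "((\<lambda>x. of_real ((x \<bullet> x) powr q) :: complex) has_derivative
          (\<lambda>h. of_real (q * (x \<bullet> x) powr (q - 1) * (2 * (x \<bullet> h))))) (at x)" if "x \<in> U" for x
    using assms(2) that by (intro hd_powr) auto
  have fd: "frechet_derivative (\<lambda>x. of_real ((x \<bullet> x) powr q) :: complex) (at x) i =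
     of_real (2*q) * (of_real ((x \<bullet> x) powr (q - 1)) * of_real (x \<bullet> i))" if "x \<in> U" for x i
  proof -
    have "frechet_derivative (\<lambda>x. of_real ((x \<bullet> x) powr q) :: complex) (at x) = (\<lambda>h. of_real (q * (x \<bullet> x) powr (q - 1) * (2 * (x \<bullet> h))))"
      using frechet_derivative_at[OF hd[OF that]] by simp
    then show ?thesis by (simp add: algebra_simps)
  qed
  have "Ck_on k U (\<lambda>x. frechet_derivative (\<lambda>x. of_real ((x \<bullet> x) powr q) :: complex) (at x) i)" for i
    apply (rule Ck_cong[OF assms(1), of "\<lambda>x. of_real (2*q) * (of_real ((x \<bullet> x) powr (q - 1)) * of_real (x \<bullet> i))"])
    using fd apply simp
    by (intro Ck_mult Ck_const Ck_coord Suc.IH assms(1))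
  moreover have "(\<lambda>x. of_real ((x \<bullet> x) powr q) :: complex) differentiable_on U"
    using hd by (auto simp: differentiable_on_def differentiable_def intro: has_derivative_at_withinI)
  ultimately show ?case by simp
qed

definition Delta :: "('a::euclidean_space \<Rightarrow> complex) \<Rightarrow> 'a \<Rightarrow> complex" where
  "Delta F x = of_real (1/2 * (x \<bullet> x) powr (-1)) * (\<Sum>i\<in>Basis. of_real (x \<bullet> i) * frechet_derivative F (at x) i)"

lemma Ck_Delta:
  assumes "open U" "0 \<notin> U" "Ck_on (Suc k) (U::'a::euclidean_space set) F"
  shows "Ck_on k U (Delta F)"
proof -
  have e: "Delta F = (\<lambda>x. of_real (1/2) * of_real ((x \<bullet> x) powr (-1)) * (\<Sum>i\<in>Basis. of_real (x \<bullet> i) * frechet_derivative F (at x) i))"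
    unfolding Delta_def by (simp add: fun_eq_iff)
  show ?thesis unfolding e
    using assms(3) by (intro Ck_mult Ck_const Ck_powr Ck_sum Ck_coord assms(1,2)) auto
qed

lemma Ck_Delta_pow:
  assumes "open U" "0 \<notin> U" "Ck_on n (U::'a::euclidean_space set) F" "l \<le> n"
  shows "Ck_on (n - l) U ((Delta ^^ l) F)"
  using assms(4)
proof (induction l)
  case 0 then show ?case using assms(3) by simp
next
  case (Suc l)
  then have "Ck_on (Suc (n - Suc l)) U ((Delta ^^ l) F)" by (simp add: Suc_diff_Suc)
  then show ?case using Ck_Delta assms by simp
qed

lemma radial_deriv:
  fixes F :: "'a::euclidean_space \<Rightarrow> complex"
  assumes dF: "F differentiable at (r *\<^sub>R \<xi>)" and r: "r > 0" and \<xi>: "norm \<xi> = 1"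
  shows "((\<lambda>s. F (s *\<^sub>R \<xi>)) has_vector_derivative (of_real (2*r) * Delta F (r *\<^sub>R \<xi>))) (at r)"
proof -
  define D where "D = frechet_derivative F (at (r *\<^sub>R \<xi>))"
  have hD: "(F has_derivative D) (at (r *\<^sub>R \<xi>))" using dF by (simp add: D_def frechet_derivative_works)
  have lin: "linear D" using hD has_derivative_linear by blast
  have h1: "((\<lambda>s. s *\<^sub>R \<xi>) has_derivative (\<lambda>h. h *\<^sub>R \<xi>)) (at r)"
    by (auto intro!: derivative_eq_intros)
  have comp: "((\<lambda>s. F (s *\<^sub>R \<xi>)) has_derivative (\<lambda>h. D (h *\<^sub>R \<xi>))) (at r)"
    using has_derivative_compose[OF h1 hD] by (simp add: o_def)
  have "D (h *\<^sub>R \<xi>) = h *\<^sub>R D \<xi>" for h using lin by (simp add: linear_scale)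
  then have vd: "((\<lambda>s. F (s *\<^sub>R \<xi>)) has_vector_derivative D \<xi>) (at r)"
    using comp by (simp add: has_vector_derivative_def)
  have "D \<xi> = D (\<Sum>i\<in>Basis. (\<xi> \<bullet> i) *\<^sub>R i)" by (simp add: euclidean_representation)
  also have "\<dots> = (\<Sum>i\<in>Basis. of_real (\<xi> \<bullet> i) * D i)"
    using lin by (simp add: linear_sum linear_scale scaleR_conv_of_real)
  finally have e1: "D \<xi> = (\<Sum>i\<in>Basis. of_real (\<xi> \<bullet> i) * D i)" .
  have xx: "(r *\<^sub>R \<xi>) \<bullet> (r *\<^sub>R \<xi>) = r^2"
    using \<xi> by (simp add: power2_eq_square power2_norm_eq_inner[symmetric])
  have "of_real (2*r) * Delta F (r *\<^sub>R \<xi>) =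
        of_real (2*r) * of_real (1/2 * (r^2) powr (-1)) * (\<Sum>i\<in>Basis. of_real r * (of_real (\<xi> \<bullet> i) * D i))"
    unfolding Delta_def xx D_def by (simp add: mult.assoc)
  also have "\<dots> = of_real (2*r) * of_real (1/2 * (r^2) powr (-1)) * of_real r * (\<Sum>i\<in>Basis. of_real (\<xi> \<bullet> i) * D i)"
    by (simp add: sum_distrib_left mult.assoc)
  also have "of_real (2*r) * of_real (1/2 * (r^2) powr (-1)) * of_real r = (1::complex)"
  proof -
    have "(r^2) powr (-1) = 1 / r^2" using r by (simp add: powr_minus divide_inverse)
    then show ?thesis using r by (simp add: power2_eq_square flip: of_real_mult)
  qed
  finally show ?thesis using vd e1 by simp
qed





lemma pascal_sum:
  fixes X Y :: "nat \<Rightarrow> 'a::comm_ring_1"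
  shows "(\<Sum>k\<le>Suc j. of_nat (Suc j choose k) * X k * Y (Suc j - k)) =
         (\<Sum>k\<le>j. of_nat (j choose k) * (X (Suc k) * Y (j - k) + X k * Y (Suc (j - k))))"
proof -
  have A: "(\<Sum>k\<le>Suc j. of_nat (Suc j choose k) * X k * Y (Suc j - k)) =
      X 0 * Y (Suc j) + (\<Sum>k\<le>j. of_nat (j choose k) * X (Suc k) * Y (j - k))
        + (\<Sum>k\<le>j. of_nat (j choose Suc k) * X (Suc k) * Y (j - k))"
    by (simp only: sum.atMost_Suc_shift) (simp add: sum.distrib algebra_simps del: sum.atMost_Suc)
  have B: "(\<Sum>k\<le>j. of_nat (j choose k) * X k * Y (Suc (j - k))) =
           (\<Sum>k\<le>Suc j. of_nat (j choose k) * X k * Y (Suc j - k))"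
    by (simp add: Suc_diff_le binomial_eq_0)
  also have "\<dots> = X 0 * Y (Suc j) + (\<Sum>k\<le>j. of_nat (j choose Suc k) * X (Suc k) * Y (j - k))"
    by (simp only: sum.atMost_Suc_shift) (simp del: sum.atMost_Suc)
  finally show ?thesis using A
    by (simp add: sum.distrib algebra_simps)
qed

lemma Ck_differentiable_at:
  assumes "Ck_on (Suc k) V (f :: 'a::euclidean_space \<Rightarrow> complex)" "open V" "x \<in> V"
  shows "f differentiable at x"
  using assms by (simp add: differentiable_on_eq_differentiable_at)

lemma deriv_chain_sq:
  fixes c :: "real \<Rightarrow> real"
  assumes "c differentiable at (r^2)"
  shows "((\<lambda>s. of_real (c (s^2)) :: complex) has_vector_derivative of_real (deriv c (r^2) * (2 * r))) (at r)"
proof -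
  have d1: "(c has_real_derivative deriv c (r^2)) (at (r^2))"
    using assms DERIV_deriv_iff_real_differentiable by blast
  have d2: "((\<lambda>s. s^2) has_real_derivative 2 * r) (at r)"
    by (auto intro!: derivative_eq_intros)
  have "((\<lambda>s. c (s^2)) has_real_derivative deriv c (r^2) * (2 * r)) (at r)"
    using DERIV_chain2[OF d1 d2] .
  then show ?thesis by (rule has_vector_derivative_of_real)
qed

lemma leibniz_Dr2:
  fixes \<xi> :: "'a::euclidean_space" and T :: "'t set" and a :: "'t \<Rightarrow> complex"
    and c :: "'t \<Rightarrow> real \<Rightarrow> real" and \<Phi> :: "'t \<Rightarrow> 'a \<Rightarrow> complex" and F :: "real \<Rightarrow> complex"
  assumes T: "finite T" and \<xi>: "norm \<xi> = 1" and V: "open V" "0 \<notin> V"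
    and hc: "\<And>t p r. t \<in> T \<Longrightarrow> a t \<noteq> 0 \<Longrightarrow> p < N \<Longrightarrow> 0 < r \<Longrightarrow> r *\<^sub>R \<xi> \<in> V \<Longrightarrow>
               (deriv ^^ p) (c t) differentiable (at (r^2))"
    and h\<Phi>: "\<And>t. t \<in> T \<Longrightarrow> a t \<noteq> 0 \<Longrightarrow> Ck_on N V (\<Phi> t)"
    and hF: "\<And>r. 0 < r \<Longrightarrow> r *\<^sub>R \<xi> \<in> V \<Longrightarrow>
               F r = (\<Sum>t\<in>T. a t * of_real (c t (r^2)) * \<Phi> t (r *\<^sub>R \<xi>))"
  shows "j \<le> N \<Longrightarrow> 0 < r \<Longrightarrow> r *\<^sub>R \<xi> \<in> V \<Longrightarrow>
    (Dr2 ^^ j) F r = (\<Sum>t\<in>T. a t * (\<Sum>k\<le>j. of_nat (j choose k) * of_real ((deriv ^^ k) (c t) (r^2))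
                         * (Delta ^^ (j - k)) (\<Phi> t) (r *\<^sub>R \<xi>)))"
proof (induction j arbitrary: r)
  case 0
  then show ?case using hF by (simp add: mult.assoc)
next
  case (Suc j)
  define S where "S = {r. 0 < r \<and> r *\<^sub>R \<xi> \<in> V}"
  have oS: "open S"
  proof -
    have "open ({0<..} \<inter> (\<lambda>r. r *\<^sub>R \<xi>) -` V)"
      by (intro open_Int open_vimage V continuous_intros)
    moreover have "S = {0<..} \<inter> (\<lambda>r. r *\<^sub>R \<xi>) -` V" by (auto simp: S_def)
    ultimately show ?thesis by simp
  qed
  have rS: "r \<in> S" using Suc.prems by (simp add: S_def)
  define R where "R j s = (\<Sum>t\<in>T. a t * (\<Sum>k\<le>j. of_nat (j choose k) * of_real ((deriv ^^ k) (c t) (s^2))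
                         * (Delta ^^ (j - k)) (\<Phi> t) (s *\<^sub>R \<xi>)))" for j s
  have IH: "(Dr2 ^^ j) F s = R j s" if "s \<in> S" for s
    using Suc.IH[of s] Suc.prems that by (simp add: S_def R_def)
  have r0: "r > 0" using Suc.prems by simp
  have der: "(R j has_vector_derivative (of_real (2*r) * R (Suc j) r)) (at r)"
  proof -
    have "((\<lambda>s. a t * (\<Sum>k\<le>j. of_nat (j choose k) * of_real ((deriv ^^ k) (c t) (s^2))
                         * (Delta ^^ (j - k)) (\<Phi> t) (s *\<^sub>R \<xi>))) has_vector_derivative
           a t * (of_real (2*r) * (\<Sum>k\<le>Suc j. of_nat (Suc j choose k) * of_real ((deriv ^^ k) (c t) (r^2))
                         * (Delta ^^ (Suc j - k)) (\<Phi> t) (r *\<^sub>R \<xi>)))) (at r)" if t: "t \<in> T" for t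
    proof (cases "a t = 0")
      case True then show ?thesis by simp
    next
      case False
      define X where "X k = (of_real ((deriv ^^ k) (c t) (r^2)) :: complex)" for k
      define Y where "Y l = (Delta ^^ l) (\<Phi> t) (r *\<^sub>R \<xi>)" for l
      have dk: "((\<lambda>s. of_nat (j choose k) * of_real ((deriv ^^ k) (c t) (s^2))
                         * (Delta ^^ (j - k)) (\<Phi> t) (s *\<^sub>R \<xi>)) has_vector_derivative
               of_real (2*r) * (of_nat (j choose k) * (X (Suc k) * Y (j - k) + X k * Y (Suc (j - k))))) (at r)"
        if k: "k \<le> j" for k
      proof -
        have c1: "((\<lambda>s. of_real ((deriv ^^ k) (c t) (s^2)) :: complex) has_vector_derivative
                     of_real ((deriv ^^ Suc k) (c t) (r^2) * (2 * r))) (at r)"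
          using deriv_chain_sq[OF hc[OF t False _ r0]] k Suc.prems by simp
        have ck: "Ck_on (N - (j - k)) V ((Delta ^^ (j - k)) (\<Phi> t))"
          using Ck_Delta_pow[OF V h\<Phi>[OF t False], of "j - k"] Suc.prems k by simp
        have "Ck_on (Suc (N - Suc (j - k))) V ((Delta ^^ (j - k)) (\<Phi> t))"
          using ck Suc.prems k by (simp add: Suc_diff_Suc)
        then have "(Delta ^^ (j - k)) (\<Phi> t) differentiable at (r *\<^sub>R \<xi>)"
          using Ck_differentiable_at V Suc.prems by blast
        from radial_deriv[OF this r0 \<xi>]
        have c2: "((\<lambda>s. (Delta ^^ (j - k)) (\<Phi> t) (s *\<^sub>R \<xi>)) has_vector_derivative
                   of_real (2 * r) * Y (Suc (j - k))) (at r)"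
          by (simp add: Y_def)
        have "((\<lambda>s. of_nat (j choose k) * (of_real ((deriv ^^ k) (c t) (s^2))
                         * (Delta ^^ (j - k)) (\<Phi> t) (s *\<^sub>R \<xi>))) has_vector_derivative
               of_nat (j choose k) * (of_real ((deriv ^^ k) (c t) (r^2)) * (of_real (2 * r) * Y (Suc (j - k))) +
                    of_real ((deriv ^^ Suc k) (c t) (r^2) * (2 * r)) * (Delta ^^ (j - k)) (\<Phi> t) (r *\<^sub>R \<xi>))) (at r)"
          by (rule has_vector_derivative_mult_right[OF has_vector_derivative_mult[OF c1 c2]])
        then show ?thesis
          by (simp add: X_def Y_def algebra_simps mult.assoc)
      qed
      have "((\<lambda>s. \<Sum>k\<le>j. of_nat (j choose k) * of_real ((deriv ^^ k) (c t) (s^2))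
                         * (Delta ^^ (j - k)) (\<Phi> t) (s *\<^sub>R \<xi>)) has_vector_derivative
              (\<Sum>k\<le>j. of_real (2*r) * (of_nat (j choose k) * (X (Suc k) * Y (j - k) + X k * Y (Suc (j - k)))))) (at r)"
        by (intro has_vector_derivative_sum dk) simp
      moreover have "(\<Sum>k\<le>j. of_real (2*r) * (of_nat (j choose k) * (X (Suc k) * Y (j - k) + X k * Y (Suc (j - k)))))
          = of_real (2*r) * (\<Sum>k\<le>Suc j. of_nat (Suc j choose k) * X k * Y (Suc j - k))"
        by (simp only: pascal_sum sum_distrib_left)
      ultimately show ?thesis
        by (intro has_vector_derivative_mult_right) (simp add: X_def Y_def)
    qed
    then have "(R j has_vector_derivative (\<Sum>t\<in>T. a t * (of_real (2*r) * (\<Sum>k\<le>Suc j. of_nat (Suc j choose k) * of_real ((deriv ^^ k) (c t) (r^2))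
                         * (Delta ^^ (Suc j - k)) (\<Phi> t) (r *\<^sub>R \<xi>))))) (at r)"
      unfolding R_def[abs_def] by (intro has_vector_derivative_sum) auto
    then show ?thesis
      by (simp add: R_def sum_distrib_left mult.left_commute)
  qed
  have der2: "((Dr2 ^^ j) F has_vector_derivative (of_real (2*r) * R (Suc j) r)) (at r)"
    by (rule has_vector_derivative_transform_within_open[OF der oS rS]) (simp add: IH)
  have "(Dr2 ^^ Suc j) F r = (1 / (2 * r)) *\<^sub>R (of_real (2*r) * R (Suc j) r)"
    by (simp add: Dr2_def vector_derivative_at[OF der2])
  also have "\<dots> = R (Suc j) r" using r0 by (simp add: scaleR_conv_of_real)
  finally show ?case by (simp add: R_def)
qed




lemma gmul_inf: "infinite C \<Longrightarrow> gmul a b C = 0"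
  by (simp add: gmul_def)

definition inv_cnt :: "nat set \<Rightarrow> nat set \<Rightarrow> nat" where
  "inv_cnt A B = card ((A \<times> B) \<inter> {(p, q). q < p})"

lemma gsign_inv: "gsign A B = (-1) ^ inv_cnt A B"
  by (simp add: gsign_def inv_cnt_def)

lemma inv_cnt_Un1:
  assumes "finite A" "finite B" "finite C" "A \<inter> B = {}"
  shows "inv_cnt (A \<union> B) C = inv_cnt A C + inv_cnt B C"
proof -
  have "((A \<union> B) \<times> C) \<inter> {(p, q). q < p} = ((A \<times> C) \<inter> {(p, q). q < p}) \<union> ((B \<times> C) \<inter> {(p, q). q < p})"
    by auto
  moreover have "((A \<times> C) \<inter> {(p, q). q < p}) \<inter> ((B \<times> C) \<inter> {(p, q). q < p}) = {}"
    using assms(4) by auto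
  ultimately show ?thesis unfolding inv_cnt_def
    using assms by (simp add: card_Un_disjoint)
qed

lemma inv_cnt_Un2:
  assumes "finite A" "finite B" "finite C" "B \<inter> C = {}"
  shows "inv_cnt A (B \<union> C) = inv_cnt A B + inv_cnt A C"
proof -
  have "(A \<times> (B \<union> C)) \<inter> {(p, q). q < p} = ((A \<times> B) \<inter> {(p, q). q < p}) \<union> ((A \<times> C) \<inter> {(p, q). q < p})"
    by auto
  moreover have "((A \<times> B) \<inter> {(p, q). q < p}) \<inter> ((A \<times> C) \<inter> {(p, q). q < p}) = {}"
    using assms(4) by auto
  ultimately show ?thesis unfolding inv_cnt_def
    using assms by (simp add: card_Un_disjoint)
qed

lemma gsign_assoc:
  assumes "finite A" "finite B" "finite R" "A \<inter> B = {}" "A \<inter> R = {}" "B \<inter> R = {}"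
  shows "gsign A B * gsign (A \<union> B) R = gsign A (B \<union> R) * gsign B R"
  using assms by (simp add: gsign_inv inv_cnt_Un1 inv_cnt_Un2 power_add)

lemma diff_aux: "B \<subseteq> A \<Longrightarrow> C - B - (A - B) = C - A" by auto

lemma gmul_assoc: "gmul (gmul a b) c = gmul a (gmul b c)"
proof
  fix C
  show "gmul (gmul a b) c C = gmul a (gmul b c) C"
  proof (cases "finite C")
    case False then show ?thesis by (simp add: gmul_inf)
  next
    case fin: True
    have "gmul (gmul a b) c C = (\<Sum>A\<in>Pow C. \<Sum>A1\<in>Pow A.
             gsign A1 (A - A1) * gsign A (C - A) * a A1 * b (A - A1) * c (C - A))"
      unfolding gmul_def by (simp add: sum_distrib_left sum_distrib_right mult.commute mult.left_commute)
    also have "\<dots> = (\<Sum>(A, A1)\<in>Sigma (Pow C) Pow.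
             gsign A1 (A - A1) * gsign A (C - A) * a A1 * b (A - A1) * c (C - A))"
      using fin by (subst sum.Sigma) (auto intro: finite_subset)
    also have "\<dots> = (\<Sum>(A1, B)\<in>Sigma (Pow C) (\<lambda>A1. Pow (C - A1)).
             gsign A1 B * gsign (A1 \<union> B) (C - A1 - B) * a A1 * b B * c (C - A1 - B))"
      apply (rule sum.reindex_bij_witness[where i="\<lambda>(A1, B). (A1 \<union> B, A1)" and j="\<lambda>(A, A1). (A1, A - A1)"])
      apply (auto simp: Un_absorb1 diff_aux)
      done
    also have "\<dots> = (\<Sum>A1\<in>Pow C. \<Sum>B\<in>Pow (C - A1).
             gsign A1 (C - A1) * gsign B (C - A1 - B) * a A1 * b B * c (C - A1 - B))"
    proof -
      have "(\<Sum>(A1, B)\<in>Sigma (Pow C) (\<lambda>A1. Pow (C - A1)).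
             gsign A1 B * gsign (A1 \<union> B) (C - A1 - B) * a A1 * b B * c (C - A1 - B)) =
            (\<Sum>(A1, B)\<in>Sigma (Pow C) (\<lambda>A1. Pow (C - A1)).
             gsign A1 (C - A1) * gsign B (C - A1 - B) * a A1 * b B * c (C - A1 - B))"
      proof (rule sum.cong[OF refl])
        fix p assume p: "p \<in> Sigma (Pow C) (\<lambda>A1. Pow (C - A1))"
        obtain A1 B where pe: "p = (A1, B)" by fastforce
        have sub: "A1 \<subseteq> C" "B \<subseteq> C - A1" using p pe by auto
        have fins: "finite A1" "finite B" "finite (C - A1 - B)" using sub fin by (auto intro: finite_subset)
        have "gsign A1 B * gsign (A1 \<union> B) (C - A1 - B) = gsign A1 (B \<union> (C - A1 - B)) * gsign B (C - A1 - B)"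
          by (rule gsign_assoc) (use fins sub in auto)
        moreover have "B \<union> (C - A1 - B) = C - A1" using sub by auto
        ultimately show "(case p of (A1, B) \<Rightarrow> gsign A1 B * gsign (A1 \<union> B) (C - A1 - B) * a A1 * b B * c (C - A1 - B)) =
            (case p of (A1, B) \<Rightarrow> gsign A1 (C - A1) * gsign B (C - A1 - B) * a A1 * b B * c (C - A1 - B))"
          using pe by simp
      qed
      also have "\<dots> = (\<Sum>A1\<in>Pow C. \<Sum>B\<in>Pow (C - A1).
             gsign A1 (C - A1) * gsign B (C - A1 - B) * a A1 * b B * c (C - A1 - B))"
        using fin by (subst sum.Sigma) (auto intro: finite_subset)
      finally show ?thesis .
    qed
    also have "\<dots> = gmul a (gmul b c) C"
      unfolding gmul_def by (simp add: sum_distrib_left mult.commute mult.left_commute)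
    finally show ?thesis .
  qed
qed


lemma gmul_gone: "finite C \<Longrightarrow> gmul gone c C = c C"
proof -
  assume fin: "finite C"
  have "gmul gone c C = (\<Sum>A\<in>Pow C. if A = {} then gsign A (C - A) * c (C - A) else 0)"
    unfolding gmul_def gone_def by (intro sum.cong) auto
  also have "\<dots> = gsign {} C * c C" using fin by (simp add: sum.delta')
  finally show ?thesis by (simp add: gsign_def)
qed

lemma gmul_gone_gmul: "gmul gone (gmul a b) = gmul a b"
proof
  fix C show "gmul gone (gmul a b) C = gmul a b C"
    by (cases "finite C") (simp_all add: gmul_gone gmul_inf)
qed

lemma gpow_gmul: "gmul (gpow x j) (gmul (gpow x i) c) = gmul (gpow x (j + i)) c"
proof (induction j)
  case 0 then show ?case by (simp add: gmul_gone_gmul)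
next
  case (Suc j) then show ?case by (simp add: gmul_assoc)
qed

lemma gmul_sum_left:
  "gmul (\<lambda>B. \<Sum>t\<in>T. f t * X t B) b C = (\<Sum>t\<in>T. f t * gmul (X t) b C)"
  unfolding gmul_def
  by (simp add: sum_distrib_left sum_distrib_right mult.commute mult.left_commute sum.swap[of _ T])

lemma gmul_sum_right:
  "gmul a (\<lambda>B. \<Sum>t\<in>T. f t * Y t B) C = (\<Sum>t\<in>T. f t * gmul a (Y t) C)"
  unfolding gmul_def
  by (simp add: sum_distrib_left sum_distrib_right mult.commute mult.left_commute sum.swap[of _ T])

lemma gmul_scal_left: "gmul (\<lambda>B. X B / d) b C = gmul X b C / d"
  unfolding gmul_def by (simp add: sum_divide_distrib)

lemma sum_nonzero_ex: "sum f S \<noteq> 0 \<Longrightarrow> \<exists>x\<in>S. f x \<noteq> 0"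
  by (meson sum.neutral)

lemma gmul_supp:
  assumes "\<And>B. a B \<noteq> 0 \<Longrightarrow> card B = p" "\<And>B. b B \<noteq> 0 \<Longrightarrow> card B = q" "gmul a b C \<noteq> 0"
  shows "finite C \<and> card C = p + q"
proof -
  have fin: "finite C" using assms(3) gmul_inf by blast
  obtain A where A: "A \<in> Pow C" "gsign A (C - A) * a A * b (C - A) \<noteq> 0"
    using sum_nonzero_ex[OF assms(3)[unfolded gmul_def]] by blast
  then have "card A = p" "card (C - A) = q" using assms(1,2) by auto
  moreover have "card C = card A + card (C - A)"
    using A(1) fin by (simp add: card_Diff_subset finite_subset card_mono)
  ultimately show ?thesis using fin by simp
qed

lemma gen_supp: "gen k B \<noteq> 0 \<Longrightarrow> card B = 1"
  by (simp add: gen_def split: if_splits)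

lemma gone_supp: "gone B \<noteq> 0 \<Longrightarrow> card B = 0"
  by (simp add: gone_def split: if_splits)

lemma gsq_supp: "gsq n B \<noteq> 0 \<Longrightarrow> card B = 2"
proof -
  assume "gsq n B \<noteq> 0"
  then obtain j where "gmul (gen (2*j - 1)) (gen (2*j)) B \<noteq> 0"
    unfolding gsq_def using sum_nonzero_ex by blast
  from gmul_supp[OF gen_supp gen_supp this] show ?thesis by simp
qed

lemma gpow_supp: "gpow (gsq n) i B \<noteq> 0 \<Longrightarrow> card B = 2 * i"
proof (induction i arbitrary: B)
  case 0 then show ?case using gone_supp by simp
next
  case (Suc i)
  have "gmul (gsq n) (gpow (gsq n) i) B \<noteq> 0" using Suc.prems by simp
  from gmul_supp[OF gsq_supp Suc.IH this] show ?case by simp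
qed

lemma gmul_cong_card:
  assumes "\<And>B. a B \<noteq> 0 \<Longrightarrow> card B = p" "finite C"
    "\<And>D. D \<subseteq> C \<Longrightarrow> card D + p = card C \<Longrightarrow> F D = F' D"
  shows "gmul a F C = gmul a F' C"
  unfolding gmul_def
proof (rule sum.cong[OF refl])
  fix A assume A: "A \<in> Pow C"
  show "gsign A (C - A) * a A * F (C - A) = gsign A (C - A) * a A * F' (C - A)"
  proof (cases "a A = 0")
    case False
    then have "card A = p" using assms(1) by blast
    moreover have "card C = card A + card (C - A)"
      using A assms(2) by (simp add: card_Diff_subset finite_subset card_mono)
    ultimately have "F (C - A) = F' (C - A)" using assms(3)[of "C - A"] by simp
    then show ?thesis by simp
  qed simp
qed

lemma gmul_zero_card:
  assumes "\<And>B. a B \<noteq> 0 \<Longrightarrow> card B = p" "card C < p" "finite C"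
  shows "gmul a F C = 0"
  unfolding gmul_def
proof (rule sum.neutral, intro ballI)
  fix A assume A: "A \<in> Pow C"
  then have "card A \<le> card C" using assms(3) by (simp add: card_mono)
  then have "a A = 0" using assms(1,2) by fastforce
  then show "gsign A (C - A) * a A * F (C - A) = 0" by simp
qed

lemma fders_cong:
  "(\<And>E. E \<subseteq> B \<union> {1..k} \<Longrightarrow> a E = a' E) \<Longrightarrow> fders k a B = fders k a' B"
proof (induction k arbitrary: B)
  case 0 then show ?case by simp
next
  case (Suc k)
  have sub: "insert (Suc k) B \<union> {1..k} \<subseteq> B \<union> {1..Suc k}" by auto
  have "fders k a (insert (Suc k) B) = fders k a' (insert (Suc k) B)"
    by (rule Suc.IH) (use Suc.prems sub in blast)
  then show ?case by (simp add: fder_def)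
qed

lemma fders_sum:
  "fders k (\<lambda>E. \<Sum>t\<in>T. f t * Y t E) B = (\<Sum>t\<in>T. f t * fders k (Y t) B)"
proof (induction k arbitrary: B)
  case 0 then show ?case by simp
next
  case (Suc k)
  then show ?case by (simp add: fder_def sum_distrib_left mult.left_commute)
qed

lemma berezin_sum:
  "berezin n (\<lambda>E. \<Sum>t\<in>T. f t * Y t E) = (\<Sum>t\<in>T. f t * berezin n (Y t))"
  unfolding berezin_def fders_sum by (simp add: sum_distrib_left mult.left_commute)

lemma fders_zero: "fders k (\<lambda>E. 0) B = 0"
  by (induction k arbitrary: B) (simp_all add: fder_def)

lemma berezin_cong:
  "(\<And>E. E \<subseteq> {1..2*n} \<Longrightarrow> a E = a' E) \<Longrightarrow> berezin n a = berezin n a'"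
  unfolding berezin_def using fders_cong[of "{}" "2*n" a a'] by simp

lemma berezin_zero:
  "(\<And>E. E \<subseteq> {1..2*n} \<Longrightarrow> a E = 0) \<Longrightarrow> berezin n a = 0"
  using berezin_cong[of n a "\<lambda>E. 0"] by (simp add: berezin_def fders_zero)




lemma sphere_int_cong:
  assumes "\<And>\<xi>. \<xi> \<in> sphere 0 1 \<Longrightarrow> \<phi> \<xi> = \<psi> \<xi>"
  shows "sphere_int (\<phi> :: real^'m \<Rightarrow> complex) = sphere_int \<psi>"
proof -
  have "integral (ball 0 1) (\<lambda>x::real^'m. \<phi> (x /\<^sub>R norm x)) = integral (ball 0 1) (\<lambda>x. \<psi> (x /\<^sub>R norm x))"
  proof (rule integral_spike[of "{0}"])
    fix x :: "real^'m" assume "x \<in> ball 0 1 - {0}"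
    then have "x /\<^sub>R norm x \<in> sphere 0 1" by (simp add: norm_divide)
    then show "\<psi> (x /\<^sub>R norm x) = \<phi> (x /\<^sub>R norm x)" using assms by simp
  qed simp
  then show ?thesis by (simp add: sphere_int_def)
qed

lemma sphere_integrable:
  fixes \<phi> :: "real^'m \<Rightarrow> complex"
  assumes "continuous_on (sphere 0 1) \<phi>"
  shows "(\<lambda>x. \<phi> (x /\<^sub>R norm x)) integrable_on ball 0 1"
proof -
  define S :: "(real^'m) set" where "S = ball 0 1 - {0}"
  have oS: "open S" "bounded S" by (auto simp: S_def)
  have img: "(\<lambda>x. x /\<^sub>R norm x) ` S \<subseteq> sphere 0 1" by (auto simp: S_def sgn_div_norm[symmetric] norm_sgn split: if_splits)
  have cont: "continuous_on S (\<lambda>x. \<phi> (x /\<^sub>R norm x))"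
  proof (rule continuous_on_compose2[OF assms _ img])
    show "continuous_on S (\<lambda>x. x /\<^sub>R norm x)"
      by (intro continuous_intros) (auto simp: S_def)
  qed
  obtain B where B: "\<And>\<xi>. \<xi> \<in> sphere 0 1 \<Longrightarrow> norm (\<phi> \<xi>) \<le> B"
    using compact_imp_bounded[OF compact_continuous_image[OF assms compact_sphere]]
    unfolding bounded_iff by (metis imageI)
  have SL: "S \<in> sets lebesgue" using oS by (simp add: borel_open sets_completionI_sets)
  have "(\<lambda>x. \<phi> (x /\<^sub>R norm x)) integrable_on S"
  proof (rule measurable_bounded_by_integrable_imp_integrable[where g="\<lambda>x. B"])
    show "(\<lambda>x. \<phi> (x /\<^sub>R norm x)) \<in> borel_measurable (lebesgue_on S)"
      by (rule continuous_imp_measurable_on_sets_lebesgue[OF cont SL])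
    show "(\<lambda>x. B) integrable_on S" using oS by (intro integrable_on_const lmeasurable_open)
    show "norm (\<phi> (x /\<^sub>R norm x)) \<le> B" if "x \<in> S" for x using B img that by blast
  qed (rule SL)
  then show ?thesis
    by (rule integrable_spike_set) (auto simp: S_def intro: negligible_subset[of "{0}"])
qed

lemma sphere_int_sum:
  fixes \<phi> :: "'t \<Rightarrow> real^'m \<Rightarrow> complex"
  assumes "finite T" "\<And>t. t \<in> T \<Longrightarrow> continuous_on (sphere 0 1) (\<phi> t)"
  shows "sphere_int (\<lambda>\<xi>. \<Sum>t\<in>T. f t * \<phi> t \<xi>) = (\<Sum>t\<in>T. f t * sphere_int (\<phi> t))"
proof -
  have "integral (ball 0 1) (\<lambda>x::real^'m. \<Sum>t\<in>T. f t * \<phi> t (x /\<^sub>R norm x))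
        = (\<Sum>t\<in>T. integral (ball 0 1) (\<lambda>x. f t * \<phi> t (x /\<^sub>R norm x)))"
    using assms by (intro integral_sum integrable_on_mult_right sphere_integrable) auto
  also have "\<dots> = (\<Sum>t\<in>T. f t * integral (ball 0 1) (\<lambda>x. \<phi> t (x /\<^sub>R norm x)))"
    by (simp add: integral_mult_right)
  finally show ?thesis
    by (simp add: sphere_int_def sum_distrib_left mult.left_commute)
qed




lemma sum_tri_ext:
  fixes X :: "nat \<Rightarrow> nat \<Rightarrow> 'a::comm_monoid_add"
  assumes "\<And>k l. k \<le> n \<Longrightarrow> l \<le> n \<Longrightarrow> n < k + l \<Longrightarrow> X k l = 0"
  shows "(\<Sum>(k,l)\<in>{(k,l). k+l \<le> n}. X k l) = (\<Sum>k\<le>n. \<Sum>l\<le>n. X k l)"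
proof -
  have "(\<Sum>(k,l)\<in>{(k,l). k+l \<le> n}. X k l) = (\<Sum>(k,l)\<in>{..n} \<times> {..n}. X k l)"
    by (rule sum.mono_neutral_left) (auto, meson assms not_le)
  also have "\<dots> = (\<Sum>k\<le>n. \<Sum>l\<le>n. X k l)" by (simp add: sum.cartesian_product)
  finally show ?thesis .
qed

lemma alt_fact_sum:
  "(\<Sum>i\<le>p. (-1)^i / (fact i * fact (p - i)) :: complex) = (if p = 0 then 1 else 0)"
proof (cases "p = 0")
  case False
  have "(\<Sum>i\<le>p. (-1)^i / (fact i * fact (p - i)) :: complex) = (\<Sum>i\<le>p. (-1)^i * of_nat (p choose i)) / fact p"
    by (simp add: sum_divide_distrib binomial_fact field_simps)
  also have "\<dots> = 0" using False by (simp add: choose_alternating_sum)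
  finally show ?thesis using False by simp
qed simp

lemma comb_identity:
  fixes H :: "nat \<Rightarrow> complex" and B :: "nat \<Rightarrow> nat \<Rightarrow> complex"
  assumes B0: "\<And>N l. n < N \<Longrightarrow> B N l = 0"
  shows "(\<Sum>j\<le>n. \<Sum>i\<le>n. \<Sum>k\<le>j. of_nat (j choose k) * ((-1)^i / fact i * H (k+i)) / fact j * B (i+j) (j-k))
         = H 0 * (\<Sum>l\<le>n. B l l / fact l)"
proof -
  define f where "f i k l = (-1)^i / (fact i * fact k * fact l) * H (k+i) * B (i+k+l) l" for i k l
  have "(\<Sum>j\<le>n. \<Sum>i\<le>n. \<Sum>k\<le>j. of_nat (j choose k) * ((-1)^i / fact i * H (k+i)) / fact j * B (i+j) (j-k))
      = (\<Sum>j\<le>n. \<Sum>k\<le>j. \<Sum>i\<le>n. f i k (j - k))"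
  proof (rule sum.cong[OF refl])
    fix j assume "j \<in> {..n}"
    have "(\<Sum>i\<le>n. \<Sum>k\<le>j. of_nat (j choose k) * ((-1)^i / fact i * H (k+i)) / fact j * B (i+j) (j-k))
        = (\<Sum>i\<le>n. \<Sum>k\<le>j. f i k (j - k))"
    proof (intro sum.cong refl)
      fix i k assume "k \<in> {..j}"
      then have kj: "k \<le> j" by simp
      have "of_nat (j choose k) / (fact j :: complex) = 1 / (fact k * fact (j - k))"
        using kj by (simp add: binomial_fact field_simps)
      moreover have "i + j = i + k + (j - k)" using kj by simp
      ultimately show "of_nat (j choose k) * ((-1)^i / fact i * H (k+i)) / fact j * B (i+j) (j-k) = f i k (j - k)"
        unfolding f_def by (simp add: field_simps)
    qed
    then show "(\<Sum>i\<le>n. \<Sum>k\<le>j. of_nat (j choose k) * ((-1)^i / fact i * H (k+i)) / fact j * B (i+j) (j-k))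
        = (\<Sum>k\<le>j. \<Sum>i\<le>n. f i k (j - k))"
      using sum.swap[of "\<lambda>i k. f i k (j - k)" "{..j}" "{..n}"] by simp
  qed
  also have "\<dots> = (\<Sum>(k,l)\<in>{(k,l). k+l \<le> n}. \<Sum>i\<le>n. f i k l)"
    by (rule sum.triangle_reindex_eq[symmetric, of "\<lambda>k l. \<Sum>i\<le>n. f i k l"])
  also have "\<dots> = (\<Sum>k\<le>n. \<Sum>l\<le>n. \<Sum>i\<le>n. f i k l)"
    by (rule sum_tri_ext) (simp add: f_def B0)
  also have "\<dots> = (\<Sum>l\<le>n. \<Sum>i\<le>n. \<Sum>k\<le>n. f i k l)"
    by (subst sum.swap) (rule sum.cong[OF refl], rule sum.swap)
  also have "\<dots> = (\<Sum>l\<le>n. \<Sum>(i,k)\<in>{(i,k). i+k \<le> n}. f i k l)"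
    by (intro sum.cong refl sum_tri_ext[symmetric]) (simp add: f_def B0)
  also have "\<dots> = (\<Sum>l\<le>n. \<Sum>p\<le>n. \<Sum>i\<le>p. f i (p - i) l)"
    by (intro sum.cong refl sum.triangle_reindex_eq)
  also have "\<dots> = (\<Sum>l\<le>n. \<Sum>p\<le>n. (if p = 0 then 1 else 0) * (H p * B (p+l) l / fact l))"
  proof (intro sum.cong refl)
    fix l p
    have "(\<Sum>i\<le>p. f i (p - i) l) = (\<Sum>i\<le>p. (-1)^i / (fact i * fact (p - i))) * (H p * B (p+l) l / fact l)"
      unfolding sum_distrib_right
      by (intro sum.cong refl) (simp add: f_def field_simps)
    then show "(\<Sum>i\<le>p. f i (p - i) l) = (if p = 0 then 1 else 0) * (H p * B (p+l) l / fact l)"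
      by (simp only: alt_fact_sum)
  qed
  also have "\<dots> = H 0 * (\<Sum>l\<le>n. B l l / fact l)"
  proof -
    have d: "(\<Sum>p\<le>m. (if p = 0 then 1 else 0) * Z p) = Z 0" for m and Z :: "nat \<Rightarrow> complex"
      by (induction m) auto
    show ?thesis by (simp only: d) (simp add: sum_distrib_left)
  qed
  finally show ?thesis .
qed




lemma cont_gmul:
  "(\<And>E. E \<subseteq> C \<Longrightarrow> continuous_on S (\<lambda>\<xi>. Y \<xi> E)) \<Longrightarrow> continuous_on S (\<lambda>\<xi>. gmul a (Y \<xi>) C)"
  unfolding gmul_def by (intro continuous_intros) auto

lemma cont_fders:
  "(\<And>E. E \<subseteq> B \<union> {1..k} \<Longrightarrow> continuous_on S (\<lambda>\<xi>. X \<xi> E)) \<Longrightarrow> continuous_on S (\<lambda>\<xi>. fders k (X \<xi>) B)"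
proof (induction k arbitrary: B)
  case 0 then show ?case by simp
next
  case (Suc k)
  have sub: "insert (Suc k) B \<union> {1..k} \<subseteq> B \<union> {1..Suc k}" by auto
  have "continuous_on S (\<lambda>\<xi>. fders k (X \<xi>) (insert (Suc k) B))"
    by (rule Suc.IH) (use Suc.prems sub in blast)
  then show ?case by (cases "Suc k \<in> B") (simp_all add: fder_def continuous_intros)
qed

lemma cont_berezin:
  "(\<And>E. E \<subseteq> {1..2*n} \<Longrightarrow> continuous_on S (\<lambda>\<xi>. X \<xi> E)) \<Longrightarrow> continuous_on S (\<lambda>\<xi>. berezin n (X \<xi>))"
  unfolding berezin_def using cont_fders[of "{}" "2*n" S X] by (simp add: continuous_intros)

lemma deriv_const_pow: "(deriv ^^ k) (\<lambda>_. (1::real)) = (if k = 0 then (\<lambda>_. 1) else (\<lambda>_. 0))"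
proof (induction k)
  case 0 then show ?case by simp
next
  case (Suc k)
  have "deriv (\<lambda>_. c) = (\<lambda>_. 0 :: real)" for c :: real
    by (rule ext, rule DERIV_imp_deriv) simp
  then show ?case using Suc by simp
qed

lemma powr_sq: "(r::real) > 0 \<Longrightarrow> (r^2) powr (q/2) = r powr q"
proof -
  assume r: "r > 0"
  have "r^2 = r powr 2" using r powr_realpow[of r 2] by simp
  then have "(r^2) powr (q/2) = r powr (2 * (q/2))" by (simp add: powr_powr)
  then show ?thesis by simp
qed

lemma gmul_cong_sub: "(\<And>E. E \<subseteq> C \<Longrightarrow> F E = F' E) \<Longrightarrow> gmul a F C = gmul a F' C"
  unfolding gmul_def by (intro sum.cong) auto

lemma berezin_scal: "berezin n (\<lambda>E. c * Y E) = c * berezin n Y"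
  using berezin_sum[of n "\<lambda>_. c" "\<lambda>_. Y" "{()}"] by simp

lemma sphere_int_scal: "sphere_int (\<lambda>\<xi>. c * \<phi> \<xi>) = c * sphere_int \<phi>"
  by (simp add: sphere_int_def)

lemma sphere_int_div: "sphere_int (\<lambda>\<xi>. \<phi> \<xi> / c) = sphere_int \<phi> / c"
  by (simp add: sphere_int_def)

lemma collapse_const:
  "(\<Sum>k\<le>l. of_nat (l choose k) * of_real ((deriv ^^ k) (\<lambda>_. (1::real)) x) * Y k) = (Y 0 :: complex)"
proof -
  have "(\<Sum>k\<le>l. of_nat (l choose k) * of_real ((deriv ^^ k) (\<lambda>_. (1::real)) x) * Y k) = (\<Sum>k\<le>l. if k = 0 then Y 0 else 0)"
    by (intro sum.cong) (auto simp: deriv_const_pow)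
  then show ?thesis by simp
qed

lemma inner_scale_unit: "norm (\<xi>::'a::real_inner) = 1 \<Longrightarrow> (r *\<^sub>R \<xi>) \<bullet> (r *\<^sub>R \<xi>) = r^2"
  by (simp add: power2_eq_square power2_norm_eq_inner[symmetric])

lemma sum_prod_split: "(\<Sum>t\<in>A \<times> B. F t) = (\<Sum>x\<in>A. \<Sum>y\<in>B. F (x, y))"
  by (simp add: sum.cartesian_product)

lemma card_sub_2n: "D \<subseteq> {1..2*n} \<Longrightarrow> card D \<le> 2*n"
  using card_mono[of "{1..2*n}" D] by simp


theorem lemma12:
  fixes g :: "real^'m \<Rightarrow> nat set \<Rightarrow> complex"
    and h :: "real \<Rightarrow> real" and n :: nat and U :: "(real^'m) set"
  assumes "open U" and "sphere 0 1 \<subseteq> U"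
    and "\<forall>A. A \<subseteq> {1..2*n} \<longrightarrow> Ck_on n U (\<lambda>x. g x A)"
    and "Cn_real n {0<..} h"
  shows "ssint n (\<lambda>x. gmul (hR2 n h x) (g x)) = of_real (h 1) * ssint n g"
proof -
  note oU = assms(1) and sU = assms(2) and gC = assms(3) and hC = assms(4)
  define m where "m = real CARD('m)"
  define V where "V = U - {0}"
  have oV: "open V" using oU by (simp add: V_def open_Diff)
  have V0: "0 \<notin> V" by (simp add: V_def)
  have sV: "sphere 0 1 \<subseteq> V" using sU by (auto simp: V_def)
  define \<Phi> where "\<Phi> E = (\<lambda>x::real^'m. of_real ((x \<bullet> x) powr ((m - 2)/2)) * g x E)" for E
  have h\<Phi>: "Ck_on n V (\<Phi> E)" if "E \<subseteq> {1..2*n}" for E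
    unfolding \<Phi>_def
  proof -
    have "Ck_on n V (\<lambda>x. g x E)" using Ck_subset[of n U] gC that by (auto simp: V_def)
    then show "Ck_on n V (\<lambda>x. of_real ((x \<bullet> x) powr ((m - 2)/2)) * g x E)"
      by (intro Ck_mult Ck_powr oV V0)
  qed
  define G where "G l \<xi> E = (Delta ^^ l) (\<Phi> E) \<xi>" for l \<xi> E
  define Q where "Q i = gpow (gsq n) i" for i
  define b where "b N l \<xi> = berezin n (gmul (Q N) (G l \<xi>))" for N l \<xi>
  have Qsupp: "\<And>B. Q i B \<noteq> 0 \<Longrightarrow> card B = 2 * i" for i
    unfolding Q_def by (rule gpow_supp)
  have contb: "continuous_on (sphere 0 1) (b N l)" if "l \<le> n" for N l
  proof -
    have "continuous_on (sphere 0 1) (\<lambda>\<xi>. G l \<xi> E)" if "E \<subseteq> {1..2*n}" for E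
    proof -
      have "Ck_on (n - l) V ((Delta ^^ l) (\<Phi> E))"
        using Ck_Delta_pow[OF oV V0 h\<Phi>[OF that] \<open>l \<le> n\<close>] .
      then have "continuous_on V ((Delta ^^ l) (\<Phi> E))" by (rule Ck_on_continuous)
      then show ?thesis unfolding G_def using sV by (rule continuous_on_subset)
    qed
    then show ?thesis unfolding b_def[abs_def]
      by (intro cont_berezin cont_gmul) (meson order_trans)
  qed
  have b0: "b N l \<xi> = 0" if "n < N" for N l \<xi>
    unfolding b_def
  proof (rule berezin_zero)
    fix E :: "nat set" assume E: "E \<subseteq> {1..2*n}"
    then have "finite E" by (rule finite_subset) simp
    moreover have "card E < 2 * N" using card_sub_2n[OF E] that by simp
    ultimately show "gmul (Q N) (G l \<xi>) E = 0" by (intro gmul_zero_card[OF Qsupp])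
  qed
  define Hd where "Hd p = (deriv ^^ p) h 1" for p
  define cL where "cL j t = of_nat (j choose snd t) * ((-1)^fst t / fact (fst t) * of_real (Hd (snd t + fst t))) / (fact j :: complex)" for j t
  have claimR: "berezin n (gmul (\<lambda>A. gpow (gsq n) l A / of_nat (fact l))
         (\<lambda>A. (Dr2 ^^ l) (\<lambda>r. of_real (r powr (real CARD('m) - 2)) * g (r *\<^sub>R \<xi>) A) 1))
       = (1 / fact l) * b l l \<xi>" if \<xi>s: "\<xi> \<in> sphere 0 1" and l: "l \<le> n" for \<xi> l
  proof -
    have n\<xi>: "norm \<xi> = 1" using \<xi>s by simp
    have \<xi>V: "\<xi> \<in> V" using \<xi>s sV by blast
    define Fl where "Fl E = (Dr2 ^^ l) (\<lambda>r. of_real (r powr (real CARD('m) - 2)) * g (r *\<^sub>R \<xi>) E) 1" for E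
    have FE: "Fl E = G l \<xi> E" if E: "E \<subseteq> {1..2*n}" for E
    proof -
      have "(Dr2 ^^ l) (\<lambda>r. of_real (r powr (real CARD('m) - 2)) * g (r *\<^sub>R \<xi>) E) 1 =
         (\<Sum>t\<in>{()}. 1 * (\<Sum>k\<le>l. of_nat (l choose k) * of_real ((deriv ^^ k) (\<lambda>_. 1) (1^2))
                         * (Delta ^^ (l - k)) (\<Phi> E) (1 *\<^sub>R \<xi>)))"
      proof (rule leibniz_Dr2[where T="{()}" and a="\<lambda>_. 1" and c="\<lambda>_ _. 1" and \<Phi>="\<lambda>_. \<Phi> E" and N=l and V=V])
        show "Ck_on l V (\<Phi> E)" using Ck_le[OF h\<Phi>[OF E] l] .
        show "(deriv ^^ p) (\<lambda>_. 1::real) differentiable at (r^2)" for p r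
          by (simp add: deriv_const_pow)
        fix r :: real assume r: "0 < r" "r *\<^sub>R \<xi> \<in> V"
        show "of_real (r powr (real CARD('m) - 2)) * g (r *\<^sub>R \<xi>) E =
             (\<Sum>t\<in>{()}. 1 * of_real 1 * \<Phi> E (r *\<^sub>R \<xi>))"
        proof -
          have ii: "(r *\<^sub>R \<xi>) \<bullet> (r *\<^sub>R \<xi>) = r^2" by (rule inner_scale_unit[OF n\<xi>])
          have "((r *\<^sub>R \<xi>) \<bullet> (r *\<^sub>R \<xi>)) powr ((m-2)/2) = r powr (m - 2)"
            unfolding ii using r(1) by (rule powr_sq)
          then show ?thesis by (simp add: \<Phi>_def m_def)
        qed
      qed (use n\<xi> oV V0 \<xi>V in auto)
      then show ?thesis by (simp add: Fl_def G_def collapse_const)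
    qed
    have "berezin n (gmul (\<lambda>A. gpow (gsq n) l A / of_nat (fact l)) Fl)
        = berezin n (\<lambda>C. (1 / fact l) * gmul (Q l) Fl C)"
      by (rule arg_cong[where f="berezin n"], rule ext) (simp add: gmul_scal_left Q_def)
    also have "\<dots> = (1 / fact l) * berezin n (gmul (Q l) Fl)"
      by (rule berezin_scal)
    also have "berezin n (gmul (Q l) Fl) = b l l \<xi>"
      unfolding b_def
      by (rule berezin_cong, rule gmul_cong_sub) (use FE in auto)
    finally show ?thesis by (simp add: Fl_def)
  qed
  have claimL: "berezin n (gmul (\<lambda>A. gpow (gsq n) j A / of_nat (fact j))
         (\<lambda>A. (Dr2 ^^ j) (\<lambda>r. of_real (r powr (real CARD('m) - 2)) * gmul (hR2 n h (r *\<^sub>R \<xi>)) (g (r *\<^sub>R \<xi>)) A) 1))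
       = (\<Sum>t\<in>{..n} \<times> {..j}. cL j t * b (j + fst t) (j - snd t) \<xi>)" if \<xi>s: "\<xi> \<in> sphere 0 1" and j: "j \<le> n" for \<xi> j
  proof -
    have n\<xi>: "norm \<xi> = 1" using \<xi>s by simp
    have \<xi>V: "\<xi> \<in> V" using \<xi>s sV by blast
    define Fj where "Fj D = (Dr2 ^^ j) (\<lambda>r. of_real (r powr (real CARD('m) - 2)) * gmul (hR2 n h (r *\<^sub>R \<xi>)) (g (r *\<^sub>R \<xi>)) D) 1" for D
    define I where "I = {..n} \<times> {..j}"
    define Y where "Y t = gmul (Q (fst t)) (G (j - snd t) \<xi>)" for t
    define cf where "cf t = (of_nat (j choose snd t) * ((-1)^fst t / fact (fst t) * of_real (Hd (snd t + fst t))) :: complex)" for t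
    have LL: "Fj D = (\<Sum>t\<in>I. cf t * Y t D)" if D: "D \<subseteq> {1..2*n}" "card D + 2*j \<le> 2*n" for D
    proof -
      have fD: "finite D" using D(1) by (rule finite_subset) simp
      define a where "a t = of_real ((-1)^fst t / fact (fst t)) * gsign (snd t) (D - snd t) * Q (fst t) (snd t)" for t :: "nat \<times> nat set"
      have eL: "Fj D = (\<Sum>t\<in>{..n} \<times> Pow D. a t * (\<Sum>k\<le>j. of_nat (j choose k) * of_real ((deriv ^^ k) ((deriv ^^ fst t) h) (1^2))
                         * (Delta ^^ (j - k)) (\<Phi> (D - snd t)) (1 *\<^sub>R \<xi>)))"
        unfolding Fj_def
      proof (rule leibniz_Dr2[where T="{..n} \<times> Pow D" and a=a and c="\<lambda>t. (deriv ^^ fst t) h" and \<Phi>="\<lambda>t. \<Phi> (D - snd t)" and N=j and V=V])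
        fix t assume t: "t \<in> {..n} \<times> Pow D" and at: "a t \<noteq> 0"
        have "D - snd t \<subseteq> {1..2*n}" using D(1) by auto
        then show "Ck_on j V (\<Phi> (D - snd t))"
          using Ck_le[OF h\<Phi> j] by blast
      next
        fix t p and r :: real assume t: "t \<in> {..n} \<times> Pow D" and at: "a t \<noteq> 0" and p: "p < j" and r: "0 < r"
        have "Q (fst t) (snd t) \<noteq> 0" using at by (auto simp: a_def)
        then have "card (snd t) = 2 * fst t" by (rule Qsupp)
        moreover have "card (snd t) \<le> card D" using t fD by (auto intro: card_mono)
        ultimately have "p + fst t < n" using D(2) p by linarith
        moreover have "(deriv ^^ p) ((deriv ^^ fst t) h) = (deriv ^^ (p + fst t)) h" by (simp add: funpow_add)
        moreover have "r^2 \<in> {0<..}" using r by simp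
        ultimately show "(deriv ^^ p) ((deriv ^^ fst t) h) differentiable at (r^2)"
          using hC by (simp add: Cn_real_def)
      next
        fix r :: real assume r: "0 < r" "r *\<^sub>R \<xi> \<in> V"
        have ii: "(r *\<^sub>R \<xi>) \<bullet> (r *\<^sub>R \<xi>) = r^2" by (rule inner_scale_unit[OF n\<xi>])
        have pw: "((r *\<^sub>R \<xi>) \<bullet> (r *\<^sub>R \<xi>)) powr ((m-2)/2) = r powr (m - 2)"
          unfolding ii using r(1) by (rule powr_sq)
        have e1: "\<Phi> E (r *\<^sub>R \<xi>) = of_real (r powr (real CARD('m) - 2)) * g (r *\<^sub>R \<xi>) E" for E
          using pw by (simp add: \<Phi>_def m_def)
        have nr: "(norm (r *\<^sub>R \<xi>))^2 = r^2" using r n\<xi> by simp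
        have "of_real (r powr (real CARD('m) - 2)) * gmul (hR2 n h (r *\<^sub>R \<xi>)) (g (r *\<^sub>R \<xi>)) D
            = of_real (r powr (real CARD('m) - 2)) * (\<Sum>i\<le>n. of_real ((-1)^i / fact i * (deriv ^^ i) h (r^2))
                 * gmul (gpow (gsq n) i) (g (r *\<^sub>R \<xi>)) D)"
          unfolding hR2_def gmul_sum_left nr ..
        also have "\<dots> = (\<Sum>i\<le>n. \<Sum>A\<in>Pow D. a (i, A) * of_real ((deriv ^^ i) h (r^2)) * \<Phi> (D - A) (r *\<^sub>R \<xi>))"
          unfolding e1 a_def gmul_def Q_def
          by (simp add: sum_distrib_left ac_simps)
        also have "\<dots> = (\<Sum>t\<in>{..n} \<times> Pow D. a t * of_real ((deriv ^^ fst t) h (r^2)) * \<Phi> (D - snd t) (r *\<^sub>R \<xi>))"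
          by (simp only: sum_prod_split fst_conv snd_conv)
        finally show "of_real (r powr (real CARD('m) - 2)) * gmul (hR2 n h (r *\<^sub>R \<xi>)) (g (r *\<^sub>R \<xi>)) D
            = (\<Sum>t\<in>{..n} \<times> Pow D. a t * of_real ((deriv ^^ fst t) h (r^2)) * \<Phi> (D - snd t) (r *\<^sub>R \<xi>))" .
      qed (use n\<xi> oV V0 \<xi>V fD j in auto)
      define W where "W i A k = of_real ((-1)^i / fact i) * gsign A (D - A) * Q i A *
          (of_nat (j choose k) * of_real (Hd (k + i)) * G (j - k) \<xi> (D - A))" for i A k
      have hd: "Hd (k + i) = (deriv ^^ k) ((deriv ^^ i) h) 1" for k i by (simp add: Hd_def funpow_add)
      have "Fj D = (\<Sum>i\<le>n. \<Sum>A\<in>Pow D. \<Sum>k\<le>j. W i A k)"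
        unfolding eL sum_prod_split W_def hd
        by (simp add: a_def sum_distrib_left G_def ac_simps)
      also have "\<dots> = (\<Sum>i\<le>n. \<Sum>k\<le>j. \<Sum>A\<in>Pow D. W i A k)"
        by (intro sum.cong refl sum.swap)
      also have "\<dots> = (\<Sum>t\<in>I. cf t * Y t D)"
        unfolding I_def sum_prod_split
        by (simp add: W_def cf_def Y_def gmul_def sum_distrib_left ac_simps)
      finally show ?thesis .
    qed
    have "berezin n (gmul (\<lambda>A. gpow (gsq n) j A / of_nat (fact j)) Fj)
        = berezin n (\<lambda>C. (1 / fact j) * gmul (Q j) Fj C)"
      by (rule arg_cong[where f="berezin n"], rule ext) (simp add: gmul_scal_left Q_def)
    also have "\<dots> = (1 / fact j) * berezin n (gmul (Q j) Fj)"
      by (rule berezin_scal)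
    also have "berezin n (gmul (Q j) Fj) = berezin n (gmul (Q j) (\<lambda>D. \<Sum>t\<in>I. cf t * Y t D))"
    proof (rule berezin_cong)
      fix C :: "nat set" assume C: "C \<subseteq> {1..2*n}"
      have fC: "finite C" using C by (rule finite_subset) simp
      show "gmul (Q j) Fj C = gmul (Q j) (\<lambda>D. \<Sum>t\<in>I. cf t * Y t D) C"
      proof (rule gmul_cong_card[OF Qsupp fC])
        fix D assume "D \<subseteq> C" "card D + 2 * j = card C"
        then show "Fj D = (\<Sum>t\<in>I. cf t * Y t D)"
          using LL C card_sub_2n[OF C] by auto
      qed
    qed
    also have "\<dots> = berezin n (\<lambda>C. \<Sum>t\<in>I. cf t * gmul (Q j) (Y t) C)"
      by (rule arg_cong[where f="berezin n"], rule ext, rule gmul_sum_right)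
    also have "\<dots> = (\<Sum>t\<in>I. cf t * berezin n (gmul (Q j) (Y t)))"
      by (rule berezin_sum)
    also have "\<dots> = (\<Sum>t\<in>I. cf t * b (j + fst t) (j - snd t) \<xi>)"
      by (simp add: Y_def b_def Q_def gpow_gmul)
    finally show ?thesis
      by (simp add: Fj_def I_def sum_distrib_left cL_def cf_def ac_simps)
  qed
  define BB where "BB N l = sphere_int (b N l)" for N l
  have "ssint n (\<lambda>x. gmul (hR2 n h x) (g x)) = (\<Sum>j\<le>n. \<Sum>t\<in>{..n} \<times> {..j}. cL j t * BB (j + fst t) (j - snd t))"
    unfolding ssint_def
  proof (intro sum.cong refl)
    fix j assume j: "j \<in> {..n}"
    have "sphere_int (\<lambda>\<xi>. berezin n (gmul (\<lambda>A. gpow (gsq n) j A / of_nat (fact j))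
         (\<lambda>A. (Dr2 ^^ j) (\<lambda>r. of_real (r powr (real CARD('m) - 2)) * gmul (hR2 n h (r *\<^sub>R \<xi>)) (g (r *\<^sub>R \<xi>)) A) 1)))
      = sphere_int (\<lambda>\<xi>. \<Sum>t\<in>{..n} \<times> {..j}. cL j t * b (j + fst t) (j - snd t) \<xi>)"
      by (rule sphere_int_cong) (use claimL j in auto)
    also have "\<dots> = (\<Sum>t\<in>{..n} \<times> {..j}. cL j t * BB (j + fst t) (j - snd t))"
      unfolding BB_def using j by (intro sphere_int_sum contb) auto
    finally show "sphere_int (\<lambda>\<xi>. berezin n (gmul (\<lambda>A. gpow (gsq n) j A / of_nat (fact j))
         (\<lambda>A. (Dr2 ^^ j) (\<lambda>r. of_real (r powr (real CARD('m) - 2)) * gmul (hR2 n h (r *\<^sub>R \<xi>)) (g (r *\<^sub>R \<xi>)) A) 1)))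
      = (\<Sum>t\<in>{..n} \<times> {..j}. cL j t * BB (j + fst t) (j - snd t))" .
  qed
  also have "\<dots> = (\<Sum>j\<le>n. \<Sum>i\<le>n. \<Sum>k\<le>j. of_nat (j choose k) * ((-1)^i / fact i * of_real (Hd (k+i))) / fact j * BB (i+j) (j-k))"
    unfolding sum.cartesian_product by (intro sum.cong refl) (auto simp: cL_def add.commute)
  also have "\<dots> = of_real (Hd 0) * (\<Sum>l\<le>n. BB l l / fact l)"
  proof (rule comb_identity[where H="\<lambda>p. of_real (Hd p)" and B=BB])
    fix N l assume "n < N"
    then have "b N l = (\<lambda>_. 0)" using b0 by auto
    then show "BB N l = 0" by (simp add: BB_def sphere_int_def)
  qed
  also have "\<dots> = of_real (h 1) * ssint n g"
  proof -
    have "ssint n g = (\<Sum>l\<le>n. BB l l / fact l)"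
      unfolding ssint_def
    proof (intro sum.cong refl)
      fix l assume l: "l \<in> {..n}"
      have "sphere_int (\<lambda>\<xi>. berezin n (gmul (\<lambda>A. gpow (gsq n) l A / of_nat (fact l))
         (\<lambda>A. (Dr2 ^^ l) (\<lambda>r. of_real (r powr (real CARD('m) - 2)) * g (r *\<^sub>R \<xi>) A) 1)))
         = sphere_int (\<lambda>\<xi>. (1 / fact l) * b l l \<xi>)"
        by (rule sphere_int_cong) (use claimR l in auto)
      then show "sphere_int (\<lambda>\<xi>. berezin n (gmul (\<lambda>A. gpow (gsq n) l A / of_nat (fact l))
         (\<lambda>A. (Dr2 ^^ l) (\<lambda>r. of_real (r powr (real CARD('m) - 2)) * g (r *\<^sub>R \<xi>) A) 1)))
         = BB l l / fact l"
        by (simp add: sphere_int_div BB_def)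
    qed
    then show ?thesis by (simp add: Hd_def)
  qed
  finally show ?thesis .
qed


end
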